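(* Let $E$ be an integral regular elliptic curve over $\mathbb{F}_q$, let $\mathbf{n}_{m-1}$ be a tuple of positive integers, $Q=q_{\mathbf{n}_{m-1}}$, and let $a$ and $\beta^*_n$ ($n\ge0$) be as in the context (assuming $\alpha_0\neq0$), with additionally $\beta^*_{-1}:=0$. Then for every $n\ge1$, $$(Q^n-1)\,\beta^*_n=(Q^n+Q^{n-1}-a)\,\beta^*_{n-1}-(Q^{n-1}-Q)\,\beta^*_{n-2},$$ and together with $\beta^*_0=1$, $\beta^*_{-1}=0$ this recursion determines all $\beta^*_n$.
   Context: Let $\zeta_E(s)=\sum_{D\ge 0}N(D)^{-s}$ be the Artin zeta function of $E$ and $\widehat\zeta_E(s)=\zeta_E(s)$ its complete Artin zeta function (genus $1$). Derived zeta functions are defined recursively (here $g=1$). For the empty tuple $\mathbf{n}_{-1}=()$ put $q_{\mathbf{n}_{-1}}=q$, $T_{\mathbf{n}_{-1}}=q^{-s}$, $\widehat\zeta^{(\mathbf{n}_{-1})}_E=\widehat\zeta_E$. For a tuple $\mathbf{n}_m=(n_0,\dots,n_m)$ of positive integers put $\mathbf{n}_{m-1}=(n_0,\dots,n_{m-1})$, $q_{\mathbf{n}_m}=q^{n_0\cdots n_m}$, $T_{\mathbf{n}_m}=q^{-n_0\cdots n_ms}$; with $\widehat Z^{(\mathbf{n}_{m-1})}_E(T_{\mathbf{n}_{m-1}}):=\widehat\zeta^{(\mathbf{n}_{m-1})}_E(s)$, $\widehat\zeta^{(\mathbf{n}_{m-1})}_E(1):=\operatorname{Res}_{T_{\mathbf{n}_{m-1}}=1}\widehat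 Z^{(\mathbf{n}_{m-1})}_E$, $\widehat v_N=\prod_{k=1}^N\widehat\zeta^{(\mathbf{n}_{m-1})}_E(k)$, $$\widehat\zeta^{(\mathbf{n}_m)}_E(s)=\sum_{a=1}^{n_m}\Biggl(\sum_{\substack{k_1,\dots,k_p>0\\ \sum k_i=n_m-a}}\frac{\widehat v_{k_1}\cdots\widehat v_{k_p}}{\prod_{j=1}^{p-1}(1-q_{\mathbf{n}_{m-1}}^{k_j+k_{j+1}})}\frac{1}{1-q_{\mathbf{n}_{m-1}}^{n_ms-n_m+a+k_p}}\Biggr)\widehat\zeta^{(\mathbf{n}_{m-1})}_E(n_ms-n_m+a)\Biggl(\sum_{\substack{l_1,\dots,l_r>0\\ \sum l_i=a-1}}\frac{1}{1-q_{\mathbf{n}_{m-1}}^{-n_ms+n_m-a+1+l_1}}\frac{\widehat v_{l_1}\cdots\widehat v_{l_r}}{\prod_{j=1}^{r-1}(1-q_{\mathbf{n}_{m-1}}^{l_j+l_{j+1}})}\Biggr),$$ inner sums over ordered tuples of positive integers, an empty-composition sum being $1$. For the tuple $\mathbf{n}_{m-1}$, with $Q=q_{\mathbf{n}_{m-1}}$ and $T=Q^{-s}$, one can write $\widehat\zeta^{(\mathbf{n}_{m-1})}_E(s)=\alpha_0\cdot\frac{1-aT+QT^2}{(1-T)(1-QT)}$ with numbers $\alpha_0=\alpha^{(\mathbf{n}_{m-1})}_E(0)$ and $a$. Normalization: $\zeta^*(s):=\frac{1-aT+QT^2}{(1-T)(1-QT)}$, $\zeta^*(1):=\operatorname{Res}_{T=1}\zeta^*=\frac{Q+1-a}{Q-1}$,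 $v^*_k:=\prod_{j=1}^k\zeta^*(j)$, $\beta^*_0:=1$ and for $n\ge1$ $$\beta^*_n:=\sum_{\substack{k_1,\dots,k_p>0\\k_1+\cdots+k_p=n}}\frac{v^*_{k_1}\cdots v^*_{k_p}}{\prod_{j=1}^{p-1}(1-Q^{k_j+k_{j+1}})},$$ the $(\mathbf{n}_{m-1},n)$-derived beta invariant of $E$ computed from the normalized function $\zeta^*$. *)

theory Defs
  imports "HOL-Analysis.Analysis" "HOL-Computational_Algebra.Primes"
begin

text \<open>Normalized zeta function zeta*(s) = (1 - a T + Q T^2)/((1-T)(1-QT)), T = Q^(-s),
  evaluated at positive integers s = j; at j = 1 it is the residue (Q+1-a)/(Q-1).\<close>
definition zeta_star :: "real \<Rightarrow> real \<Rightarrow> nat \<Rightarrow> real" where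
  "zeta_star Q a j =
     (if j = 1 then (Q + 1 - a) / (Q - 1)
      else (let T = 1 / Q ^ j in (1 - a * T + Q * T\<^sup>2) / ((1 - T) * (1 - Q * T))))"

definition v_star :: "real \<Rightarrow> real \<Rightarrow> nat \<Rightarrow> real" where
  "v_star Q a k = (\<Prod>j=1..k. zeta_star Q a j)"

definition compositions :: "nat \<Rightarrow> nat list set" where
  "compositions n = {ks. (\<forall>k\<in>set ks. 0 < k) \<and> sum_list ks = n}"

text \<open>beta*_n for integer n: 0 for n < 0 (so beta*_{-1} = 0); for n = 0 the sum over the
  single empty composition gives beta*_0 = 1.\<close>
definition beta_star :: "real \<Rightarrow> real \<Rightarrow> int \<Rightarrow> real" where
  "beta_star Q a n =
     (if n < 0 then 0
      else \<Sum>ks\<in>compositions (nat n).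
             (\<Prod>k\<leftarrow>ks. v_star Q a k) /
             (\<Prod>j<length ks - 1. (1 - Q ^ (ks ! j + ks ! (j + 1)))))"

definition prime_power :: "nat \<Rightarrow> bool" where
  "prime_power q \<longleftrightarrow> (\<exists>p k. prime p \<and> 0 < k \<and> q = p ^ k)"

end

theory Submission
  imports Defs
begin


function S :: "real \<Rightarrow> real \<Rightarrow> nat \<Rightarrow> real \<Rightarrow> real" where
  "S Q a n x = (if n = 0 then 1 else (\<Sum>l=1..n. v_star Q a l * S Q a (n - l) (Q^l) / (1 - x * Q^l)))"
  by auto
termination by (relation "Wellfounded.measure (\<lambda>(Q,a,n,x). n)") auto

declare S.simps[simp del]

lemma S_0[simp]: "S Q a 0 x = 1" by (simp add: S.simps)
lemma S_pos: "n \<noteq> 0 \<Longrightarrow> S Q a n x = (\<Sum>l=1..n. v_star Q a l * S Q a (n - l) (Q^l) / (1 - x * Q^l))"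
  by (simp add: S.simps)

fun W :: "real \<Rightarrow> real \<Rightarrow> nat list \<Rightarrow> real \<Rightarrow> real" where
  "W Q a [] x = 1"
| "W Q a (k # ks) x = v_star Q a k / (1 - x * Q^k) * W Q a ks (Q^k)"

definition adj :: "real \<Rightarrow> nat list \<Rightarrow> real" where
  "adj Q ks = (\<Prod>j<length ks - 1. (1 - Q ^ (ks ! j + ks ! (j + 1))))"

lemma adj_cons2: "adj Q (k # k' # ks) = (1 - Q^(k + k')) * adj Q (k' # ks)"
proof -
  have "length (k # k' # ks) - 1 = Suc (length (k' # ks) - 1)" by simp
  then show ?thesis unfolding adj_def
    by (simp only: prod.lessThan_Suc_shift) simp
qed

lemma W_general: "W Q a ks x = (\<Prod>k\<leftarrow>ks. v_star Q a k) / adj Q ks / (if ks = [] then 1 else 1 - x * Q^(hd ks))"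
proof (induction ks arbitrary: x)
  case Nil then show ?case by (simp add: adj_def)
next
  case (Cons k ks)
  show ?case
  proof (cases ks)
    case Nil then show ?thesis by (simp add: adj_def)
  next
    case (Cons k' ks')
    show ?thesis using Cons.IH[of "Q^k"] unfolding Cons
      by (simp add: adj_cons2 power_add field_simps)
  qed
qed

lemma W_0: "W Q a ks 0 = (\<Prod>k\<leftarrow>ks. v_star Q a k) / adj Q ks"
  by (simp add: W_general)

lemma comp_0: "compositions 0 = {[]}"
proof -
  have "ks = []" if "\<forall>k\<in>set ks. 0 < k" "\<forall>k\<in>set ks. k = 0" for ks :: "nat list"
    using that by (cases ks) auto
  then show ?thesis unfolding compositions_def by (auto simp: sum_list_eq_0_iff)
qed

lemma comp_Suc: assumes "n \<noteq> 0"
  shows "compositions n = (\<lambda>(l,ks). l # ks) ` (SIGMA l:{1..n}. compositions (n - l))"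
proof
  show "compositions n \<subseteq> (\<lambda>(l,ks). l # ks) ` (SIGMA l:{1..n}. compositions (n - l))"
  proof
    fix ks assume "ks \<in> compositions n"
    then have h: "\<forall>k\<in>set ks. 0 < k" "sum_list ks = n" unfolding compositions_def by auto
    then obtain l ks' where ks: "ks = l # ks'" using assms by (cases ks) auto
    have "l \<in> {1..n}" "ks' \<in> compositions (n - l)" using h unfolding ks compositions_def by auto
    then show "ks \<in> (\<lambda>(l,ks). l # ks) ` (SIGMA l:{1..n}. compositions (n - l))"
      unfolding ks by force
  qed
next
  show "(\<lambda>(l,ks). l # ks) ` (SIGMA l:{1..n}. compositions (n - l)) \<subseteq> compositions n"
    unfolding compositions_def by auto
qed

lemma comp_finite: "finite (compositions n)"
proof (induction n rule: less_induct)
  case (less n)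
  show ?case
  proof (cases "n = 0")
    case True then show ?thesis by (simp add: comp_0)
  next
    case False
    then show ?thesis unfolding comp_Suc[OF False]
      using less by (intro finite_imageI finite_SigmaI) auto
  qed
qed

lemma sum_W: "(\<Sum>ks\<in>compositions n. W Q a ks x) = S Q a n x"
proof (induction n arbitrary: x rule: less_induct)
  case (less n)
  show ?case
  proof (cases "n = 0")
    case True then show ?thesis by (simp add: comp_0)
  next
    case False
    have inj: "inj_on (\<lambda>(l,ks). l # ks) (SIGMA l:{1..n}. compositions (n - l))"
      by (auto simp: inj_on_def)
    have "(\<Sum>ks\<in>compositions n. W Q a ks x) = (\<Sum>p\<in>(SIGMA l:{1..n}. compositions (n - l)). W Q a ((\<lambda>(l,ks). l # ks) p) x)"
      unfolding comp_Suc[OF False] by (rule sum.reindex[OF inj, unfolded comp_def])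
    also have "\<dots> = (\<Sum>(l,ks)\<in>(SIGMA l:{1..n}. compositions (n - l)). W Q a (l # ks) x)"
      by (intro sum.cong) auto
    also have "\<dots> = (\<Sum>l=1..n. \<Sum>ks\<in>compositions (n - l). W Q a (l # ks) x)"
      by (rule sum.Sigma[symmetric]) (auto simp: comp_finite)
    also have "\<dots> = (\<Sum>l=1..n. v_star Q a l / (1 - x * Q^l) * (\<Sum>ks\<in>compositions (n - l). W Q a ks (Q^l)))"
      by (simp add: sum_distrib_left)
    also have "\<dots> = (\<Sum>l=1..n. v_star Q a l / (1 - x * Q^l) * S Q a (n - l) (Q^l))"
      using less False by (intro sum.cong) auto
    also have "\<dots> = S Q a n x" using False by (simp add: S_pos)
    finally show ?thesis .
  qed
qed

lemma beta_S: "beta_star Q a (int n) = S Q a n 0"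
proof -
  have "beta_star Q a (int n) = (\<Sum>ks\<in>compositions n. W Q a ks 0)"
    unfolding beta_star_def W_0 adj_def by simp
  then show ?thesis using sum_W by simp
qed




lemma v_star_0[simp]: "v_star Q a 0 = 1" by (simp add: v_star_def)
lemma v_star_Suc: "v_star Q a (Suc l) = v_star Q a l * zeta_star Q a (Suc l)"
  unfolding v_star_def by (simp add: prod.cl_ivl_Suc)
lemma v_star_1: "v_star Q a 1 = (Q + 1 - a) / (Q - 1)"
  unfolding v_star_def by (simp add: zeta_star_def)

definition cc :: "real \<Rightarrow> real \<Rightarrow> nat \<Rightarrow> nat \<Rightarrow> real" where
  "cc Q a n l = (if 1 \<le> l \<and> l \<le> n then v_star Q a l * S Q a (n - l) (Q^l) else 0)"

definition DD :: "real \<Rightarrow> real \<Rightarrow> nat \<Rightarrow> real \<Rightarrow> real" where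
  "DD Q a m x = (1 - x*Q) * S Q a m x - (1 - x*Q^(m+1)) * S Q a m (Q*x)
      - Q*x*(Q^(m-1) - 1) * S Q a (m-1) (Q*x)"

definition EE :: "real \<Rightarrow> real \<Rightarrow> nat \<Rightarrow> nat \<Rightarrow> real" where
  "EE Q a m l = cc Q a m l * (Q^l - Q) - cc Q a m (l-1) * (Q^l - Q^(m+1))
      - cc Q a (m-1) (l-1) * Q * (Q^(m-1) - 1)"

definition GG :: "real \<Rightarrow> real \<Rightarrow> nat \<Rightarrow> real \<Rightarrow> real" where
  "GG Q a n x = S Q a n (Q*x) - (Q + 1 - a) * (1 / (1 - x*Q)) * S Q a n (Q*x)
      - (1 - Q^(n+1)) * S Q a (n+1) x - Q^n * S Q a n x
      + (\<Sum>l=1..n. cc Q a n l * (Q^l / (1 - x*Q^l) - Q^(l+1) / (1 - x*Q^(l+1))))"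

lemma cc_0[simp]: "cc Q a n 0 = 0" by (simp add: cc_def)
lemma cc_big: "n < l \<Longrightarrow> cc Q a n l = 0" by (simp add: cc_def)

lemma sum_extend:
  "{m..n} \<subseteq> {m'..n'} \<Longrightarrow> (\<forall>i\<in>{m'..n'} - {m..n}. f i = 0) \<Longrightarrow> sum f {m..n} = sum f {m'..(n'::nat)}"
  by (rule sum.mono_neutral_left) auto

lemma sum_split1: "(\<Sum>l=1..Suc n. h l) = h 1 + (\<Sum>j=1..n. h (Suc j))"
proof -
  have "(\<Sum>l=1..Suc n. h l) = h 1 + (\<Sum>l=Suc 1..Suc n. h l)"
    by (subst sum.atLeast_Suc_atMost) auto
  also have "(\<Sum>l=Suc 1..Suc n. h l) = (\<Sum>j=1..n. h (Suc j))"
    by (rule sum.shift_bounds_cl_Suc_ivl)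
  finally show ?thesis .
qed

lemma tele: "(\<Sum>l=1..Suc m. f l - f (l - 1)) = f (Suc m) - (f 0 :: real)"
  by (induction m) auto

context
  fixes Q a :: real
  assumes Q1: "1 < Q"
begin

lemma Qpow_gt1: "1 \<le> l \<Longrightarrow> 1 < Q^l"
  using Q1 by (simp add: one_less_power)

lemma den_nz: "x = 0 \<or> 1 \<le> x \<Longrightarrow> 1 \<le> l \<Longrightarrow> 1 - x * Q^l \<noteq> 0"
proof -
  assume x: "x = 0 \<or> 1 \<le> x" and l: "1 \<le> l"
  have q: "1 < Q^l" using Qpow_gt1[OF l] .
  show ?thesis
  proof (cases "x = 0")
    case True then show ?thesis by simp
  next
    case False
    then have x1: "1 \<le> x" using x by simp
    have "1 * Q^l \<le> x * Q^l" using x1 q by (intro mult_right_mono) auto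
    then have "Q^l \<le> x * Q^l" by simp
    then show ?thesis using q by linarith
  qed
qed

lemma S_sum: "1 \<le> n \<Longrightarrow> n \<le> K \<Longrightarrow> S Q a n x = (\<Sum>l=1..K. cc Q a n l / (1 - x*Q^l))"
proof -
  assume n: "1 \<le> n" and K: "n \<le> K"
  have "S Q a n x = (\<Sum>l=1..n. cc Q a n l / (1 - x*Q^l))"
    using n by (simp add: S_pos cc_def)
  also have "\<dots> = (\<Sum>l=1..K. cc Q a n l / (1 - x*Q^l))"
    using K by (intro sum_extend) (auto simp: cc_big)
  finally show ?thesis .
qed

lemma S_sum_shift: "1 \<le> n \<Longrightarrow> n + 1 \<le> K \<Longrightarrow> S Q a n (Q*x) = (\<Sum>l=1..K. cc Q a n (l-1) / (1 - x*Q^l))"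
proof -
  assume n: "1 \<le> n" and K: "n + 1 \<le> K"
  have "S Q a n (Q*x) = (\<Sum>l=1..n. cc Q a n l / (1 - x*Q^(Suc l)))"
    using n by (simp add: S_pos cc_def mult.assoc mult.left_commute)
  also have "\<dots> = (\<Sum>l=Suc 1..Suc n. cc Q a n (l-1) / (1 - x*Q^l))"
    by (subst sum.shift_bounds_cl_Suc_ivl) simp
  also have "\<dots> = (\<Sum>l=1..K. cc Q a n (l-1) / (1 - x*Q^l))"
    using K by (intro sum_extend) (auto simp: cc_big)
  finally show ?thesis .
qed

end



lemma v1: fixes cA cB cC x Q p nu qn qnB :: real
  assumes dd: "1 - x*(Q*p) \<noteq> 0" and qj: "1 - p \<noteq> 0"
  shows "cA / (1 - x*(Q*p)) + nu * (cA * p / (1 - p) / (1 - x*(Q*p)))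
      - (1 - qnB) * (cB / (1 - x*(Q*p))) - qn * (cC / (1 - x*(Q*p)))
      + cC * (Q*p) / (1 - x*(Q*p)) - cA * (Q*p) / (1 - x*(Q*p))
    = ((1 + nu * p / (1 - p) - Q*p) * cA - (1 - qnB) * cB - (qn - Q*p) * cC) / (1 - x*(Q*p))"
  using dd qj by (simp add: divide_simps) (simp add: algebra_simps)

lemma t1: fixes y Q a :: real assumes "y - 1 \<noteq> 0" "y - Q \<noteq> 0" "Q \<noteq> 0"
  shows "(y^2 - a*y + Q) / ((y-1)*(y-Q)) * (1 - y) = (y^2 - a*y + Q) / (Q - y)"
  using assms by (simp add: divide_simps) (simp add: algebra_simps power2_eq_square)

lemma t2: fixes y Q a p :: real assumes "y = Q*p" "1 - p \<noteq> 0" "Q - y \<noteq> 0" "Q \<noteq> 0"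
  shows "1 + (Q+1-a)*p/(1-p) - y = (y^2 - a*y + Q) / (Q - y)"
  using assms by (simp add: divide_simps) (simp add: algebra_simps power2_eq_square)

lemma t3: fixes T Q a p :: real assumes "T*(Q*p) = 1" "Q*p \<noteq> 0" "Q*p - 1 \<noteq> 0" "Q*p - Q \<noteq> 0"
  shows "(1 - a*T + Q*T^2) / ((1 - T)*(1 - Q*T)) = ((Q*p)^2 - a*(Q*p) + Q) / ((Q*p - 1)*(Q*p - Q))"
proof -
  have n: "(1 - a*T + Q*T^2) * (Q*p)^2 = (Q*p)^2 - a*(Q*p) + Q"
  proof -
    have "(1 - a*T + Q*T^2) * (Q*p)^2 = (Q*p)^2 - a*(T*(Q*p))*(Q*p) + Q*(T*(Q*p))^2"
      by (simp add: algebra_simps power2_eq_square)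
    then show ?thesis using assms(1) by simp
  qed
  have d: "((1 - T)*(1 - Q*T)) * (Q*p)^2 = (Q*p - 1)*(Q*p - Q)"
  proof -
    have "((1 - T)*(1 - Q*T)) * (Q*p)^2 = (Q*p - T*(Q*p))*(Q*p - Q*(T*(Q*p)))"
      by (simp add: algebra_simps power2_eq_square)
    then show ?thesis using assms(1) by simp
  qed
  have s: "(Q*p)^2 \<noteq> 0" using assms(2) by simp
  have "(1 - a*T + Q*T^2) / ((1 - T)*(1 - Q*T)) = ((1 - a*T + Q*T^2) * (Q*p)^2) / (((1 - T)*(1 - Q*T)) * (Q*p)^2)"
    using s by simp
  then show ?thesis unfolding n d .
qed

lemma t4: fixes y Q a nu :: real assumes "y - 1 \<noteq> 0" "y - Q \<noteq> 0" "Q \<noteq> 0" "1 - y \<noteq> 0"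
  shows "(y^2 - a*y + Q) / ((y-1)*(y-Q)) * (y - Q) = y - (Q+1-a) * y / (1 - y) - Q"
  using assms by (simp add: divide_simps) (simp add: algebra_simps power2_eq_square)

context
  fixes Q a :: real
  assumes Q1: "1 < Q"
begin

lemma D_zero_if_E:
  assumes m: "1 \<le> m" and x: "1 \<le> x" and E: "\<And>l. 2 \<le> l \<Longrightarrow> l \<le> m \<Longrightarrow> EE Q a m l = 0"
  shows "DD Q a m x = 0"
proof -
  have gx: "x = 0 \<or> 1 \<le> x" using x by simp
  define K where "K = Suc m"
  have s1: "S Q a m x = (\<Sum>l=1..K. cc Q a m l / (1 - x*Q^l))"
    using m by (intro S_sum[OF Q1]) (auto simp: K_def)
  have s2: "S Q a m (Q*x) = (\<Sum>l=1..K. cc Q a m (l-1) / (1 - x*Q^l))"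
    using m by (intro S_sum_shift[OF Q1]) (auto simp: K_def)
  have s3: "Q*x*(Q^(m-1) - 1) * S Q a (m-1) (Q*x)
      = (\<Sum>l=1..K. Q*x*(Q^(m-1) - 1) * (cc Q a (m-1) (l-1) / (1 - x*Q^l)))"
  proof (cases "m = 1")
    case True then show ?thesis by simp
  next
    case False
    then have "S Q a (m-1) (Q*x) = (\<Sum>l=1..K. cc Q a (m-1) (l-1) / (1 - x*Q^l))"
      using m by (intro S_sum_shift[OF Q1]) (auto simp: K_def)
    then show ?thesis by (simp add: sum_distrib_left)
  qed
  have "DD Q a m x = (\<Sum>l=1..K. (1 - x*Q) * (cc Q a m l / (1 - x*Q^l))
        - (1 - x*Q^(m+1)) * (cc Q a m (l-1) / (1 - x*Q^l))
        - Q*x*(Q^(m-1) - 1) * (cc Q a (m-1) (l-1) / (1 - x*Q^l)))"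
    unfolding DD_def s1 s2 s3 by (simp add: sum_distrib_left sum_subtractf)
  also have "\<dots> = (\<Sum>l=1..K. cc Q a m l - cc Q a m (l-1))"
  proof (rule sum.cong[OF refl])
    fix l assume l: "l \<in> {1..K}"
    have d: "1 - x*Q^l \<noteq> 0" using den_nz[OF Q1 gx] l by auto
    have split: "(1 - x*Q) * (cc Q a m l / (1 - x*Q^l))
        - (1 - x*Q^(m+1)) * (cc Q a m (l-1) / (1 - x*Q^l))
        - Q*x*(Q^(m-1) - 1) * (cc Q a (m-1) (l-1) / (1 - x*Q^l))
        = ((1 - x*Q) * cc Q a m l - (1 - x*Q^(m+1)) * cc Q a m (l-1)
            - Q*x*(Q^(m-1) - 1) * cc Q a (m-1) (l-1)) / (1 - x*Q^l)"
      by (simp add: diff_divide_distrib)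
    have key: "(1 - x*Q) * cc Q a m l - (1 - x*Q^(m+1)) * cc Q a m (l-1)
            - Q*x*(Q^(m-1) - 1) * cc Q a (m-1) (l-1)
        = (cc Q a m l - cc Q a m (l-1)) * (1 - x*Q^l) + x * EE Q a m l"
      unfolding EE_def by (simp add: algebra_simps)
    show "(1 - x*Q) * (cc Q a m l / (1 - x*Q^l))
        - (1 - x*Q^(m+1)) * (cc Q a m (l-1) / (1 - x*Q^l))
        - Q*x*(Q^(m-1) - 1) * (cc Q a (m-1) (l-1) / (1 - x*Q^l))
        = cc Q a m l - cc Q a m (l-1)"
    proof (cases "l = 1 \<or> l = K")
      case True
      then have "EE Q a m l = 0"
        using m by (auto simp: EE_def K_def cc_big)
      then show ?thesis unfolding split key using d by simp
    next
      case False
      then have "2 \<le> l" "l \<le> m" using l by (auto simp: K_def)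
      then have "EE Q a m l = 0" using E by auto
      then show ?thesis unfolding split key using d by simp
    qed
  qed
  also have "\<dots> = cc Q a m K - cc Q a m 0"
    unfolding K_def by (rule tele)
  also have "\<dots> = 0" by (simp add: K_def cc_big)
  finally show ?thesis .
qed


lemma zeta_closed:
  assumes k: "1 \<le> k"
  shows "zeta_star Q a (Suc k) = ((Q*Q^k)^2 - a*(Q*Q^k) + Q) / ((Q*Q^k - 1) * (Q*Q^k - Q))"
proof -
  define p where "p = Q^k"
  have p1: "1 < p" using Qpow_gt1[OF Q1 k] by (simp add: p_def)
  have Qp1: "Q < Q*p" using p1 Q1 by simp
  have Qp2: "1 < Q*p" using Qp1 Q1 by linarith
  have h: "(1 / (Q*p)) * (Q*p) = 1" "Q*p \<noteq> 0" "Q*p - 1 \<noteq> 0" "Q*p - Q \<noteq> 0"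
    using Qp1 Qp2 by auto
  have "zeta_star Q a (Suc k) = (1 - a * (1/(Q*p)) + Q * (1/(Q*p))^2) / ((1 - 1/(Q*p)) * (1 - Q * (1/(Q*p))))"
    unfolding zeta_star_def using k by (simp add: Let_def p_def)
  also have "\<dots> = ((Q*p)^2 - a*(Q*p) + Q) / ((Q*p - 1) * (Q*p - Q))"
    by (rule t3[OF h])
  finally show ?thesis by (simp add: p_def)
qed

lemma S_Qx: "1 \<le> n \<Longrightarrow> S Q a n (Q*x) = (\<Sum>l=1..n. cc Q a n l / (1 - x*Q^(Suc l)))"
  by (simp add: S_pos cc_def mult.assoc mult.left_commute)

lemma zeta_id1:
  assumes j: "1 \<le> j"
  shows "zeta_star Q a (Suc j) * (1 - Q^(Suc j)) = 1 + (Q+1-a) * Q^j / (1 - Q^j) - Q^(Suc j)"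
proof -
  define p where "p = Q^j"
  define y where "y = Q*p"
  have p1: "1 < p" using Qpow_gt1[OF Q1 j] by (simp add: p_def)
  have Qp1: "Q < y" using p1 Q1 by (simp add: y_def)
  have "zeta_star Q a (Suc j) * (1 - Q^(Suc j)) = (y^2 - a*y + Q) / ((y-1)*(y-Q)) * (1 - y)"
    unfolding zeta_closed[OF j] by (simp add: y_def p_def)
  also have "\<dots> = (y^2 - a*y + Q) / (Q - y)"
    using Qp1 Q1 by (intro t1) auto
  also have "\<dots> = 1 + (Q+1-a)*p/(1-p) - y"
    using Qp1 Q1 p1 by (intro t2[symmetric]) (auto simp: y_def)
  finally show ?thesis by (simp add: y_def p_def)
qed

lemma zeta_id2:
  assumes k: "1 \<le> k"
  shows "zeta_star Q a (Suc k) * (Q*Q^k - Q) = Q*Q^k - (Q+1-a) * (Q * Q^k) / (1 - Q^k*Q) - Q"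
proof -
  define y where "y = Q*Q^k"
  have p1: "1 < Q^k" using Qpow_gt1[OF Q1 k] .
  have Qp1: "Q < y" using p1 Q1 by (simp add: y_def)
  have "zeta_star Q a (Suc k) * (Q*Q^k - Q) = (y^2 - a*y + Q) / ((y-1)*(y-Q)) * (y - Q)"
    unfolding zeta_closed[OF k] by (simp add: y_def)
  also have "\<dots> = y - (Q+1-a) * y / (1 - y) - Q"
    using Qp1 Q1 by (intro t4) auto
  finally show ?thesis by (simp add: y_def mult.commute)
qed

lemma GG0: "x = 0 \<or> 1 \<le> x \<Longrightarrow> GG Q a 0 x = 0"
proof -
  assume gx: "x = 0 \<or> 1 \<le> x"
  have d: "1 - x*Q \<noteq> 0" using den_nz[OF Q1 gx, of 1] by simp
  have S1: "S Q a (Suc 0) x = v_star Q a 1 / (1 - x*Q)" by (simp add: S_pos)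
  have Q0: "Q - 1 \<noteq> 0" using Q1 by simp
  have "GG Q a 0 x = 1 - (Q+1-a)*(1/(1-x*Q)) - (1-Q)*S Q a (Suc 0) x - 1" by (simp add: GG_def)
  also have "\<dots> = 0" unfolding S1 v_star_1 using d Q0
    by (simp add: divide_simps) (simp add: algebra_simps)
  finally show ?thesis .
qed

lemma xsum: "x = 0 \<or> 1 \<le> x \<Longrightarrow>
  x * (\<Sum>l=1..n. cc Q a n l * (Q^l / (1 - x*Q^l) - Q^(l+1) / (1 - x*Q^(l+1)))) = S Q a n x - S Q a n (Q*x)"
proof -
  assume gx: "x = 0 \<or> 1 \<le> x"
  show ?thesis
  proof (cases "n = 0")
    case True then show ?thesis by simp
  next
    case False
    then have n: "1 \<le> n" by simp
    have "x * (\<Sum>l=1..n. cc Q a n l * (Q^l / (1 - x*Q^l) - Q^(l+1) / (1 - x*Q^(l+1))))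
        = (\<Sum>l=1..n. cc Q a n l / (1 - x*Q^l) - cc Q a n l / (1 - x*Q^(Suc l)))"
      unfolding sum_distrib_left
    proof (rule sum.cong[OF refl])
      fix l assume l: "l \<in> {1..n}"
      have d1: "1 - x*Q^l \<noteq> 0" using den_nz[OF Q1 gx] l by auto
      have d2: "1 - x*Q^(Suc l) \<noteq> 0" using den_nz[OF Q1 gx, of "Suc l"] by simp
      then have d3: "x * (Q * Q^l) \<noteq> 1" by simp
      show "x * (cc Q a n l * (Q^l / (1 - x*Q^l) - Q^(l+1) / (1 - x*Q^(l+1))))
          = cc Q a n l / (1 - x*Q^l) - cc Q a n l / (1 - x*Q^(Suc l))"
        using d1 d2 d3 by (simp add: divide_simps) (simp add: algebra_simps)
    qed
    also have "\<dots> = S Q a n x - S Q a n (Q*x)"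
      unfolding S_sum[OF Q1 n order_refl, where x=x] S_Qx[OF n] by (simp add: sum_subtractf)
    finally show ?thesis .
  qed
qed

lemma EE_GG:
  assumes l: "2 \<le> l" "l \<le> m"
  shows "EE Q a m l = v_star Q a (l-1) * (Q * Q^(l-1) * GG Q a (m-l) (Q^(l-1)))"
proof -
  obtain k where k: "l = Suc k" "1 \<le> k" using l by (cases l) auto
  define n where "n = m - l"
  define x where "x = Q^k"
  have m: "m = n + k + 1" using l k by (simp add: n_def)
  have x1: "1 \<le> x" using Qpow_gt1[OF Q1 k(2)] by (simp add: x_def)
  have gx: "x = 0 \<or> 1 \<le> x" using x1 by simp
  have d: "1 - x*Q \<noteq> 0" using den_nz[OF Q1 gx, of 1] by simp
  have c1: "cc Q a m l = v_star Q a k * zeta_star Q a (Suc k) * S Q a n (Q*x)"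
    unfolding cc_def using l k by (simp add: v_star_Suc n_def x_def)
  have c2: "cc Q a m (l-1) = v_star Q a k * S Q a (n+1) x"
    unfolding cc_def using l k m by (simp add: x_def)
  have c3: "cc Q a (m-1) (l-1) = v_star Q a k * S Q a n x"
    unfolding cc_def using l k m by (simp add: x_def)
  have xs: "x * (\<Sum>l=1..n. cc Q a n l * (Q^l / (1 - x*Q^l) - Q^(l+1) / (1 - x*Q^(l+1)))) = S Q a n x - S Q a n (Q*x)"
    by (rule xsum[OF gx])
  have z: "zeta_star Q a (Suc k) * (Q*x - Q) = Q*x - (Q+1-a) * (Q * x) / (1 - x*Q) - Q"
    using zeta_id2[OF k(2)] by (simp add: x_def)
  have pw1: "Q^l = Q*x" using k by (simp add: x_def)
  have pw2: "Q^(m+1) = Q*x*Q^(n+1)" using m k by (simp add: x_def power_add)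
  have pw3: "Q^(m-1) = Q^n * x" using m k by (simp add: x_def power_add)
  have "EE Q a m l = v_star Q a k * (zeta_star Q a (Suc k) * (Q*x - Q) * S Q a n (Q*x)
        - Q*x*(1 - Q^(n+1)) * S Q a (n+1) x - Q*(Q^n*x - 1) * S Q a n x)"
    unfolding EE_def c1 c2 c3 pw1 pw2 pw3 by (simp add: algebra_simps)
  also have "\<dots> = v_star Q a k * (Q * x * GG Q a n x)"
  proof -
    have "Q * x * GG Q a n x = Q*x*S Q a n (Q*x) - (Q+1-a) * (Q*x) / (1 - x*Q) * S Q a n (Q*x)
        - Q*x*(1 - Q^(n+1)) * S Q a (n+1) x - Q*x*Q^n * S Q a n x
        + Q * (x * (\<Sum>l=1..n. cc Q a n l * (Q^l / (1 - x*Q^l) - Q^(l+1) / (1 - x*Q^(l+1)))))"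
      unfolding GG_def by (simp add: algebra_simps)
    also have "\<dots> = (Q*x - (Q+1-a) * (Q * x) / (1 - x*Q) - Q) * S Q a n (Q*x)
        - Q*x*(1 - Q^(n+1)) * S Q a (n+1) x - Q*(Q^n*x - 1) * S Q a n x"
      unfolding xs by (simp add: algebra_simps)
    finally show ?thesis unfolding z[symmetric] by simp
  qed
  finally show ?thesis using k by (simp add: x_def n_def)
qed

lemma GG_expand:
  assumes n: "1 \<le> n" and gx: "x = 0 \<or> 1 \<le> x"
  shows "GG Q a n x = (\<Sum>l=1..Suc n. v_star Q a l * DD Q a (n+1-l) (Q^(l-1)) / (1 - x*Q^l))"
proof -
  define K where "K = Suc n"
  define \<nu> where "\<nu> = Q + 1 - a"
  have dn: "\<And>l. 1 \<le> l \<Longrightarrow> 1 - x*Q^l \<noteq> 0" using den_nz[OF Q1 gx] by auto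
  have d1: "1 - x*Q \<noteq> 0" using dn[of 1] by simp
  have qn: "\<And>j. 1 \<le> j \<Longrightarrow> 1 - Q^j \<noteq> 0" using Qpow_gt1[OF Q1] by force
  have a: "S Q a n (Q*x) = (\<Sum>l=1..K. cc Q a n (l-1) / (1 - x*Q^l))"
    using n by (intro S_sum_shift[OF Q1]) (auto simp: K_def)
  have S1: "S Q a n 1 = (\<Sum>j=1..n. cc Q a n j / (1 - Q^j))"
    using S_sum[OF Q1 n order_refl, where x=1] by simp
  have b: "(1 / (1 - x*Q)) * S Q a n (Q*x) = S Q a n 1 / (1 - x*Q)
      - (\<Sum>l=1..K. cc Q a n (l-1) * Q^(l-1) / (1 - Q^(l-1)) / (1 - x*Q^l))"
  proof -
    have "(1 / (1 - x*Q)) * S Q a n (Q*x)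
        = (\<Sum>j=1..n. cc Q a n j / (1 - Q^j) / (1 - x*Q) - cc Q a n j * Q^j / (1 - Q^j) / (1 - x*Q^(Suc j)))"
      unfolding S_Qx[OF n] sum_distrib_left
    proof (rule sum.cong[OF refl])
      fix j assume j: "j \<in> {1..n}"
      have e1: "1 - x*Q^(Suc j) \<noteq> 0" using dn[of "Suc j"] by simp
      have e2: "1 - Q^j \<noteq> 0" using qn j by auto
      show "1 / (1 - x*Q) * (cc Q a n j / (1 - x*Q^(Suc j)))
          = cc Q a n j / (1 - Q^j) / (1 - x*Q) - cc Q a n j * Q^j / (1 - Q^j) / (1 - x*Q^(Suc j))"
        using d1 e1 e2 by (simp add: divide_simps) (simp add: algebra_simps)
    qed
    also have "\<dots> = S Q a n 1 / (1 - x*Q) - (\<Sum>j=1..n. cc Q a n j * Q^j / (1 - Q^j) / (1 - x*Q^(Suc j)))"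
      unfolding S1 by (simp add: sum_subtractf sum_divide_distrib)
    also have "(\<Sum>j=1..n. cc Q a n j * Q^j / (1 - Q^j) / (1 - x*Q^(Suc j)))
        = (\<Sum>l=1..K. cc Q a n (l-1) * Q^(l-1) / (1 - Q^(l-1)) / (1 - x*Q^l))"
      unfolding K_def sum_split1 by simp
    finally show ?thesis .
  qed
  have c: "S Q a (n+1) x = (\<Sum>l=1..K. cc Q a (n+1) l / (1 - x*Q^l))"
    by (intro S_sum[OF Q1]) (auto simp: K_def)
  have d: "S Q a n x = (\<Sum>l=1..K. cc Q a n l / (1 - x*Q^l))"
    using n by (intro S_sum[OF Q1]) (auto simp: K_def)
  have e: "(\<Sum>l=1..n. cc Q a n l * (Q^l / (1 - x*Q^l) - Q^(l+1) / (1 - x*Q^(l+1))))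
      = (\<Sum>l=1..K. cc Q a n l * Q^l / (1 - x*Q^l)) - (\<Sum>l=1..K. cc Q a n (l-1) * Q^l / (1 - x*Q^l))"
  proof -
    have "(\<Sum>l=1..n. cc Q a n l * (Q^l / (1 - x*Q^l) - Q^(l+1) / (1 - x*Q^(l+1))))
       = (\<Sum>l=1..n. cc Q a n l * Q^l / (1 - x*Q^l)) - (\<Sum>l=1..n. cc Q a n l * Q^(Suc l) / (1 - x*Q^(Suc l)))"
      by (simp add: sum_subtractf right_diff_distrib)
    also have "(\<Sum>l=1..n. cc Q a n l * Q^l / (1 - x*Q^l)) = (\<Sum>l=1..K. cc Q a n l * Q^l / (1 - x*Q^l))"
      by (intro sum_extend) (auto simp: K_def cc_big)
    also have "(\<Sum>l=1..n. cc Q a n l * Q^(Suc l) / (1 - x*Q^(Suc l))) = (\<Sum>l=1..K. cc Q a n (l-1) * Q^l / (1 - x*Q^l))"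
      unfolding K_def sum_split1 by simp
    finally show ?thesis .
  qed
  define t where "t l = cc Q a n (l-1) / (1 - x*Q^l)
      + \<nu> * (cc Q a n (l-1) * Q^(l-1) / (1 - Q^(l-1)) / (1 - x*Q^l))
      - (1 - Q^(n+1)) * (cc Q a (n+1) l / (1 - x*Q^l)) - Q^n * (cc Q a n l / (1 - x*Q^l))
      + cc Q a n l * Q^l / (1 - x*Q^l) - cc Q a n (l-1) * Q^l / (1 - x*Q^l)" for l
  have T: "(\<Sum>l=1..K. t l) = (\<Sum>l=1..K. cc Q a n (l-1) / (1 - x*Q^l))
      + \<nu> * (\<Sum>l=1..K. cc Q a n (l-1) * Q^(l-1) / (1 - Q^(l-1)) / (1 - x*Q^l))
      - (1 - Q^(n+1)) * (\<Sum>l=1..K. cc Q a (n+1) l / (1 - x*Q^l)) - Q^n * (\<Sum>l=1..K. cc Q a n l / (1 - x*Q^l))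
      + (\<Sum>l=1..K. cc Q a n l * Q^l / (1 - x*Q^l)) - (\<Sum>l=1..K. cc Q a n (l-1) * Q^l / (1 - x*Q^l))"
    unfolding t_def by (simp add: sum.distrib sum_subtractf sum_distrib_left)
  have G1: "GG Q a n x = - \<nu> * (S Q a n 1 / (1 - x*Q)) + (\<Sum>l=1..K. t l)"
  proof -
    have "GG Q a n x = S Q a n (Q*x) - \<nu> * ((1 / (1 - x*Q)) * S Q a n (Q*x))
        - (1 - Q^(n+1)) * S Q a (n+1) x - Q^n * S Q a n x
        + (\<Sum>l=1..n. cc Q a n l * (Q^l / (1 - x*Q^l) - Q^(l+1) / (1 - x*Q^(l+1))))"
      unfolding GG_def \<nu>_def by (simp add: mult.assoc)
    also have "\<dots> = - \<nu> * (S Q a n 1 / (1 - x*Q)) + (\<Sum>l=1..K. t l)"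
      unfolding b unfolding a c d e T by (simp add: algebra_simps)
    finally show ?thesis .
  qed
  have T1: "- \<nu> * (S Q a n 1 / (1 - x*Q)) + t 1 = v_star Q a 1 * DD Q a n 1 / (1 - x*Q)"
  proof -
    define V where "V = v_star Q a 1"
    have c1: "cc Q a (n+1) 1 = V * S Q a n Q" unfolding cc_def V_def by simp
    have c2: "cc Q a n 1 = V * S Q a (n-1) Q" unfolding cc_def V_def using n by simp
    have pq: "Q^n = Q * Q^(n-1)" using n by (simp add: power_eq_if)
    have Q0: "Q - 1 \<noteq> 0" using Q1 by simp
    have hnu: "\<nu> = V * (Q - 1)" unfolding V_def v_star_1 \<nu>_def using Q0 by simp
    show ?thesis unfolding t_def DD_def c1 c2 hnu V_def[symmetric]
      using d1 unfolding pq by (simp add: divide_simps) (simp add: algebra_simps)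
  qed
  have T2: "t (Suc j) = v_star Q a (Suc j) * DD Q a (n+1 - Suc j) (Q^(Suc j - 1)) / (1 - x*Q^(Suc j))"
    if j: "j \<in> {1..n}" for j
  proof -
    define m where "m = n - j"
    have j1: "1 \<le> j" "j \<le> n" using j by auto
    have dd: "1 - x*Q^(Suc j) \<noteq> 0" using dn[of "Suc j"] by simp
    have qj: "1 - Q^j \<noteq> 0" using qn j1 by auto
    have vS: "v_star Q a (Suc j) = v_star Q a j * zeta_star Q a (Suc j)" by (rule v_star_Suc)
    have c1: "cc Q a n j = v_star Q a j * S Q a m (Q^j)" unfolding cc_def m_def using j1 by simp
    have c2: "cc Q a (n+1) (Suc j) = v_star Q a (Suc j) * S Q a m (Q*Q^j)" unfolding cc_def m_def using j1 by simp
    have claim: "v_star Q a (Suc j) * DD Q a m (Q^j)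
        = zeta_star Q a (Suc j) * (1 - Q^(Suc j)) * cc Q a n j - (1 - Q^(n+1)) * cc Q a (n+1) (Suc j)
          - (Q^n - Q^(Suc j)) * cc Q a n (Suc j)"
    proof (cases "j = n")
      case True
      then have m0: "m = 0" by (simp add: m_def)
      have "cc Q a n (Suc j) = 0" using True by (simp add: cc_big)
      then show ?thesis unfolding DD_def c1 c2 vS m0 using True
        by (simp add: algebra_simps)
    next
      case False
      then have m1: "1 \<le> m" using j1 by (simp add: m_def)
      have c3: "cc Q a n (Suc j) = v_star Q a (Suc j) * S Q a (m-1) (Q*Q^j)"
        unfolding cc_def m_def using j1 False by (simp add: diff_Suc)
      obtain k where mk: "m = Suc k" using m1 by (cases m) auto
      have nn: "n = j + Suc k" using j1 mk by (simp add: m_def)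
      have e1: "Q^(m+1) = Q*Q*Q^k" by (simp add: mk)
      have e2: "Q^(m-1) = Q^k" by (simp add: mk)
      have e3: "Q^(n+1) = Q*Q^j*Q*Q^k" by (simp add: nn power_add)
      have e4: "Q^n = Q^j*Q*Q^k" by (simp add: nn power_add)
      have e5: "Q^(Suc j) = Q*Q^j" by simp
      show ?thesis unfolding DD_def c1 c2 c3 vS e1 e2 e3 e4 e5
        by (simp add: algebra_simps)
    qed
    have tt: "t (Suc j) = (zeta_star Q a (Suc j) * (1 - Q^(Suc j)) * cc Q a n j - (1 - Q^(n+1)) * cc Q a (n+1) (Suc j)
          - (Q^n - Q^(Suc j)) * cc Q a n (Suc j)) / (1 - x*Q^(Suc j))"
    proof -
      have dd': "1 - x*(Q*Q^j) \<noteq> 0" using dd by simp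
      have "t (Suc j) = ((1 + \<nu> * Q^j / (1 - Q^j) - Q*Q^j) * cc Q a n j - (1 - Q^(n+1)) * cc Q a (n+1) (Suc j)
          - (Q^n - Q*Q^j) * cc Q a n (Suc j)) / (1 - x*(Q*Q^j))"
        unfolding t_def using v1[OF dd' qj, where cA="cc Q a n j" and cB="cc Q a (n+1) (Suc j)"
            and cC="cc Q a n (Suc j)" and nu="\<nu>" and qn="Q^n" and qnB="Q^(n+1)"] by simp
      then show ?thesis unfolding zeta_id1[OF j1(1)] \<nu>_def by simp
    qed
    show ?thesis unfolding tt claim[symmetric] by (simp add: m_def)
  qed
  have "GG Q a n x = - \<nu> * (S Q a n 1 / (1 - x*Q)) + t 1 + (\<Sum>j=1..n. t (Suc j))"
    unfolding G1 K_def sum_split1 by simp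
  also have "\<dots> = v_star Q a 1 * DD Q a n 1 / (1 - x*Q)
      + (\<Sum>j=1..n. v_star Q a (Suc j) * DD Q a (n+1 - Suc j) (Q^(Suc j - 1)) / (1 - x*Q^(Suc j)))"
    unfolding T1 using T2 by simp
  also have "\<dots> = (\<Sum>l=1..Suc n. v_star Q a l * DD Q a (n+1-l) (Q^(l-1)) / (1 - x*Q^l))"
    unfolding sum_split1 by simp
  finally show ?thesis .
qed

lemma DD_zero: "1 \<le> x \<Longrightarrow> DD Q a m x = 0"
proof (induction m arbitrary: x rule: less_induct)
  case (less m)
  show ?case
  proof (cases "m = 0")
    case True then show ?thesis by (simp add: DD_def)
  next
    case False
    show ?thesis
    proof (rule D_zero_if_E)
      show "1 \<le> m" using False by simp
      show "1 \<le> x" by fact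
      fix l assume l: "2 \<le> l" "l \<le> m"
      have x1: "1 \<le> Q^(l-1)" using Q1 by (simp add: one_le_power)
      have "GG Q a (m-l) (Q^(l-1)) = 0"
      proof (cases "m - l = 0")
        case True then show ?thesis using GG0 x1 by simp
      next
        case False
        have "GG Q a (m-l) (Q^(l-1))
            = (\<Sum>l'=1..Suc (m-l). v_star Q a l' * DD Q a (m-l+1-l') (Q^(l'-1)) / (1 - Q^(l-1)*Q^l'))"
          using False x1 by (intro GG_expand) auto
        also have "\<dots> = 0"
        proof (intro sum.neutral ballI)
          fix l' assume l': "l' \<in> {1..Suc (m-l)}"
          have "DD Q a (m-l+1-l') (Q^(l'-1)) = 0"
            using l' l by (intro less.IH) (auto simp: one_le_power Q1 less_imp_le)
          then show "v_star Q a l' * DD Q a (m-l+1-l') (Q^(l'-1)) / (1 - Q^(l-1)*Q^l') = 0" by simp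
        qed
        finally show ?thesis .
      qed
      then show "EE Q a m l = 0" using EE_GG[OF l] by simp
    qed
  qed
qed

lemma GG_zero: "x = 0 \<or> 1 \<le> x \<Longrightarrow> GG Q a n x = 0"
proof -
  assume gx: "x = 0 \<or> 1 \<le> x"
  show ?thesis
  proof (cases "n = 0")
    case True then show ?thesis using GG0 gx by simp
  next
    case False
    then have "GG Q a n x = (\<Sum>l=1..Suc n. v_star Q a l * DD Q a (n+1-l) (Q^(l-1)) / (1 - x*Q^l))"
      using gx by (intro GG_expand) auto
    also have "\<dots> = 0"
      by (intro sum.neutral ballI) (simp add: DD_zero one_le_power Q1 less_imp_le)
    finally show ?thesis .
  qed
qed

lemma EE_zero: "2 \<le> l \<Longrightarrow> l \<le> m \<Longrightarrow> EE Q a m l = 0"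
  using EE_GG[of l m] GG_zero[of "Q^(l-1)"] Q1 by (simp add: one_le_power)

lemma M_id:
  assumes n: "1 \<le> n"
  shows "(1 - Q) * (\<Sum>l=1..n. cc Q a n l * Q^l) = Q * (1 - Q^n) * S Q a n 0 + Q * (Q^(n-1) - 1) * S Q a (n-1) 0"
proof -
  define M where "M = (\<Sum>l=1..n. cc Q a n l * Q^l)"
  have B: "S Q a n 0 = (\<Sum>l=1..n. cc Q a n l)" using S_sum[OF Q1 n order_refl, where x=0] by simp
  have z: "(\<Sum>l=1..Suc n. EE Q a n l) = 0"
  proof (intro sum.neutral ballI)
    fix l assume l: "l \<in> {1..Suc n}"
    show "EE Q a n l = 0"
    proof (cases "l = 1 \<or> l = Suc n")
      case True then show ?thesis using n by (auto simp: EE_def cc_big)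
    next
      case False then show ?thesis using l by (intro EE_zero) auto
    qed
  qed
  have s1: "(\<Sum>l=1..Suc n. cc Q a n l * (Q^l - Q)) = M - Q * S Q a n 0"
  proof -
    have "(\<Sum>l=1..Suc n. cc Q a n l * (Q^l - Q)) = (\<Sum>l=1..n. cc Q a n l * (Q^l - Q))"
      by (simp add: cc_big)
    also have "\<dots> = (\<Sum>l=1..n. cc Q a n l * Q^l - Q * cc Q a n l)"
      by (intro sum.cong) (auto simp: algebra_simps)
    also have "\<dots> = M - Q * S Q a n 0"
      unfolding M_def B by (simp add: sum_subtractf sum_distrib_left)
    finally show ?thesis .
  qed
  have s2: "(\<Sum>l=1..Suc n. cc Q a n (l-1) * (Q^l - Q^(n+1))) = Q * M - Q^(n+1) * S Q a n 0"
  proof -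
    have "(\<Sum>l=1..Suc n. cc Q a n (l-1) * (Q^l - Q^(n+1))) = (\<Sum>j=1..n. cc Q a n j * (Q * Q^j - Q^(n+1)))"
      unfolding sum_split1 by simp
    also have "\<dots> = (\<Sum>j=1..n. Q * (cc Q a n j * Q^j) - Q^(n+1) * cc Q a n j)"
      by (intro sum.cong) (auto simp: algebra_simps)
    also have "\<dots> = Q * M - Q^(n+1) * S Q a n 0"
      unfolding M_def B by (simp add: sum_subtractf sum_distrib_left)
    finally show ?thesis .
  qed
  have s3: "(\<Sum>l=1..Suc n. cc Q a (n-1) (l-1) * Q * (Q^(n-1) - 1)) = Q * (Q^(n-1) - 1) * S Q a (n-1) 0"
  proof (cases "n = 1")
    case True then show ?thesis by simp
  next
    case False
    then have n2: "1 \<le> n - 1" using n by simp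
    have B2: "S Q a (n-1) 0 = (\<Sum>j=1..n. cc Q a (n-1) j)"
      using S_sum[OF Q1 n2, where K=n and x=0] by simp
    have "(\<Sum>l=1..Suc n. cc Q a (n-1) (l-1) * Q * (Q^(n-1) - 1)) = (\<Sum>j=1..n. cc Q a (n-1) j * Q * (Q^(n-1) - 1))"
      unfolding sum_split1 by simp
    then show ?thesis unfolding B2 by (simp add: sum_distrib_left sum_distrib_right mult.commute mult.left_commute)
  qed
  have "(\<Sum>l=1..Suc n. EE Q a n l) = (M - Q * S Q a n 0) - (Q * M - Q^(n+1) * S Q a n 0) - Q * (Q^(n-1) - 1) * S Q a (n-1) 0"
    unfolding EE_def s1[symmetric] s2[symmetric] s3[symmetric] by (simp add: sum_subtractf)
  then have "(M - Q * S Q a n 0) - (Q * M - Q^(n+1) * S Q a n 0) - Q * (Q^(n-1) - 1) * S Q a (n-1) 0 = 0"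
    using z by simp
  then show ?thesis unfolding M_def[symmetric] by (simp add: algebra_simps)
qed

lemma beta_rec:
  assumes n: "1 \<le> n"
  shows "(Q^(n+1) - 1) * S Q a (n+1) 0 = (Q^(n+1) + Q^n - a) * S Q a n 0 - (Q^n - Q) * S Q a (n-1) 0"
proof -
  have g: "GG Q a n 0 = 0" using GG_zero[of 0] by simp
  have e: "(\<Sum>l=1..n. cc Q a n l * (Q^l - Q^(l+1))) = (1 - Q) * (\<Sum>l=1..n. cc Q a n l * Q^l)"
    by (simp add: sum_distrib_left algebra_simps)
  have G: "S Q a n 0 - (Q + 1 - a) * S Q a n 0 - (1 - Q^(n+1)) * S Q a (n+1) 0 - Q^n * S Q a n 0
      + (1 - Q) * (\<Sum>l=1..n. cc Q a n l * Q^l) = 0"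
    using g unfolding GG_def e[symmetric] by simp
  have pq: "Q * Q^(n-1) = Q^n" using n by (simp flip: power_Suc)
  have M: "(1 - Q) * (\<Sum>l=1..n. cc Q a n l * Q^l) = Q * (1 - Q^n) * S Q a n 0 + (Q^n - Q) * S Q a (n-1) 0"
    using M_id[OF n] pq by (simp add: algebra_simps)
  show ?thesis using G unfolding M by (simp add: algebra_simps)
qed

end



theorem theorem4p4:
  fixes q :: nat and ns :: "nat list" and a Q :: real
  assumes "prime_power q"
    and "\<forall>n\<in>set ns. 0 < n"
    and "Q = real q ^ prod_list ns"
  shows "(\<forall>n::nat. 1 \<le> n \<longrightarrow>
           (Q ^ n - 1) * beta_star Q a (int n) =
             (Q ^ n + Q ^ (n - 1) - a) * beta_star Q a (int n - 1)
             - (Q ^ (n - 1) - Q) * beta_star Q a (int n - 2))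
      \<and> beta_star Q a 0 = 1 \<and> beta_star Q a (-1) = 0
      \<and> (\<forall>f :: int \<Rightarrow> real. f 0 = 1 \<and> f (-1) = 0 \<and>
           (\<forall>n::nat. 1 \<le> n \<longrightarrow>
              (Q ^ n - 1) * f (int n) =
                (Q ^ n + Q ^ (n - 1) - a) * f (int n - 1) - (Q ^ (n - 1) - Q) * f (int n - 2))
           \<longrightarrow> (\<forall>n\<ge>-1. f n = beta_star Q a n))"
proof -
  have Q1: "1 < Q"
  proof -
    obtain p k where pk: "prime p" "0 < k" "q = p^k" using assms(1) unfolding prime_power_def by blast
    have p2: "2 \<le> p" using pk(1) by (rule prime_ge_2_nat)
    have "p \<le> p^k" using pk(2) p2 by (simp add: self_le_power)
    then have q2: "2 \<le> q" using p2 pk(3) by simp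
    have pos: "\<forall>n\<in>set xs. 0 < n \<Longrightarrow> 0 < prod_list xs" for xs :: "nat list"
      by (induction xs) auto
    have "0 < prod_list ns" using pos assms(2) by blast
    moreover have "1 < real q" using q2 by simp
    ultimately show ?thesis using assms(3) by (simp add: one_less_power)
  qed
  have bS: "beta_star Q a (int n) = S Q a n 0" for n by (rule beta_S)
  have bneg: "beta_star Q a z = 0" if "z < 0" for z using that by (simp add: beta_star_def)
  have b0: "beta_star Q a 0 = 1" using bS[of 0] by simp
  have bm1: "beta_star Q a (-1) = 0" by (simp add: bneg)
  have rec: "(Q ^ n - 1) * beta_star Q a (int n) =
             (Q ^ n + Q ^ (n - 1) - a) * beta_star Q a (int n - 1)
             - (Q ^ (n - 1) - Q) * beta_star Q a (int n - 2)" if n: "1 \<le> n" for n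
  proof (cases "n = 1")
    case True
    have "S Q a 1 0 = (Q + 1 - a) / (Q - 1)" using v_star_1[of Q a] by (simp add: S_pos)
    then show ?thesis using True Q1 bS[of 1] b0 bm1 by (simp add: field_simps)
  next
    case False
    then have n2: "2 \<le> n" using n by simp
    have i1: "int n - 1 = int (n-1)" and i2: "int n - 2 = int (n-2)" using n2 by auto
    have e: "n - 1 + 1 = n" "n - 1 - 1 = n - 2" using n2 by auto
    have r: "(Q^(n-1+1) - 1) * S Q a (n-1+1) 0
        = (Q^(n-1+1) + Q^(n-1) - a) * S Q a (n-1) 0 - (Q^(n-1) - Q) * S Q a (n-1-1) 0"
      by (rule beta_rec[OF Q1]) (use n2 in simp)
    show ?thesis using r unfolding e i1 i2 bS by simp
  qed
  have uniq: "\<forall>n\<ge>-1. f n = beta_star Q a n"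
    if f0: "f 0 = 1" and fm1: "f (-1) = 0"
      and frec: "\<forall>n::nat. 1 \<le> n \<longrightarrow>
              (Q ^ n - 1) * f (int n) =
                (Q ^ n + Q ^ (n - 1) - a) * f (int n - 1) - (Q ^ (n - 1) - Q) * f (int n - 2)"
    for f :: "int \<Rightarrow> real"
  proof -
    have main: "f (int p) = beta_star Q a (int p) \<and> f (int p - 1) = beta_star Q a (int p - 1)" for p
    proof (induction p)
      case 0 then show ?case using f0 fm1 b0 bm1 by simp
    next
      case (Suc p)
      have e1: "int (Suc p) - 1 = int p" by simp
      have e2: "int (Suc p) - 2 = int p - 1" by simp
      have nz: "Q ^ Suc p - 1 \<noteq> 0" using Q1 one_less_power[of Q "Suc p"] by simp
      have A: "(Q ^ Suc p - 1) * f (int (Suc p)) = (Q ^ Suc p - 1) * beta_star Q a (int (Suc p))"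
        using frec[rule_format, of "Suc p"] rec[of "Suc p"] Suc.IH unfolding e1 e2 by simp
      have "f (int (Suc p)) = beta_star Q a (int (Suc p))" using A nz by simp
      then show ?case using Suc.IH by simp
    qed
    show ?thesis
    proof (intro allI impI)
      fix n :: int assume "-1 \<le> n"
      then consider "n = -1" | "0 \<le> n" by linarith
      then show "f n = beta_star Q a n"
      proof cases
        case 1 then show ?thesis using fm1 bm1 by simp
      next
        case 2
        then have "n = int (nat n)" by simp
        then show ?thesis using main[of "nat n"] by metis
      qed
    qed
  qed
  show ?thesis using rec b0 bm1 uniq by blast
qed


end
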